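(* Let $G=(V,E)$ be a network and consider an $\mathbb{F}_q$-valued rate-$\omega$ LNEC code on $G$, as in the context. For a sink node $t\in T$ with $\dim\Phi(t)=\omega$, the code corrects at $t$ any error vector in the set $$\mathcal{Z}\Big(\mathcal{E}_t\big(\lfloor (d_{\min}^{(t)}-1)/2\rfloor\big)\Big)=\Big\{z\in\mathbb{F}_q^{|E|}: z\text{ matches some }\xi\in\mathcal{E}_t\big(\lfloor (d_{\min}^{(t)}-1)/2\rfloor\big)\Big\}.$$
   Context: Network: $G=(V,E)$ is a finite directed acyclic graph (parallel edges allowed) with a single source node $s$ and a set of sink nodes $T\subseteq V\setminus\{s\}$; $s$ has no incoming edges and sink nodes have no outgoing edges. For an edge $e$, $\mathrm{tail}(e)$, $\mathrm{head}(e)$ are its tail and head; $\mathrm{In}(v)$, $\mathrm{Out}(v)$ are the incoming/outgoing edge sets of node $v$. A directed path is a sequence of edges $(e_1,\dots,e_m)$, $m\ge1$, with $\mathrm{tail}(e_{k+1})=\mathrm{head}(e_k)$. LNEC code: with rate $\omega\ge1$ and finite field $\mathbb{F}_q$, introduce imaginary source edges $d_1',\dots,d_\omega'$ ending at $s$ with $\mathrm{In}(s)=\{d_1',\dots,d_\omega'\}$, and for each $e\in E$ an imaginary error edge $e'$ with head $\mathrm{tail}(e)$; $E'=\{e':e\in E\}$ (for non-source nodes, $\mathrm{In}(v)$ contains only edges of $E$). The code is given by local encoding coefficients $k_{d,e}\in\mathbb{F}_q$ for $e\in E$, $d\in\mathrm{In}(\mathrm{tail}(e))$. Extended global encoding kernels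 are vectors in $\mathbb{F}_q^{\omega+|E|}$ indexed by $\{d_i'\}\cup E'$: $\tilde f_{d_i'}=1_{d_i'}$, $\tilde f_{e'}=1_{e'}$ (standard basis vectors), and recursively in topological order $\tilde f_e=\sum_{d\in\mathrm{In}(\mathrm{tail}(e))}k_{d,e}\tilde f_d+1_{e'}$. For sink $t$, $\mathrm{row}_t(d')=(\tilde f_{\hat e}(d'):\hat e\in\mathrm{In}(t))$. Message space $\Phi(t)=\langle\mathrm{row}_t(d_i'):1\le i\le\omega\rangle$; error space $\Delta(t,\xi)=\langle\mathrm{row}_t(e'):e\in\xi\rangle$ for $\xi\subseteq E$. Minimum distance at $t$: $d_{\min}^{(t)}=\min\{|\xi|:\xi\subseteq E,\ \Phi(t)\cap\Delta(t,\xi)\neq\{0\}\}$. Error correction: an error vector $z=(z_e:e\in E)\in\mathbb{F}_q^{|E|}$ matches $\xi\subseteq E$ if $z_e=0$ for all $e\notin\xi$. For source message $x\in\mathbb{F}_q^\omega$ and error vector $z$, the received vector at $t$ is $\tilde y_t(x,z)=(x\ z)\cdot\tilde F_t$, $\tilde F_t=[\tilde f_e:e\in\mathrm{In}(t)]$. For a set $\mathcal{Z}$ of error vectors, the code corrects at $t$ any error vector in $\mathcal{Z}$ if for all $x,x'\in\mathbb{F}_q^\omega$ and $z,z'\in\mathcal{Z}$, $\tilde y_t(x,z)=\tilde y_t(x',z')$ implies $x=x'$. Graph notions: for $\xi\subseteq E$ and a node $u$, $A\subseteq E$ is a cut separating $u$ from $\xi$ if every directed path in $G$ whose first edge lies in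 $\xi$ and whose last edge has head $u$ contains an edge of $A$; $\mathrm{mincut}(\xi,u)$ is the minimum size of such a cut. $\mathcal{E}_t(r)=\{\xi\subseteq E:\mathrm{mincut}(\xi,t)\le r\}$. *)

theory Defs
  imports Complex_Main "HOL-Library.Function_Algebras"
begin

text \<open>A network: node set V, edge set E (edges are abstract, so parallel
 edges are allowed), tail/head maps tail, head, source s, sinks T.\<close>

definition is_path :: "'e set \<Rightarrow> ('e \<Rightarrow> 'v) \<Rightarrow> ('e \<Rightarrow> 'v) \<Rightarrow> 'e list \<Rightarrow> bool" where
  "is_path E tail head p \<longleftrightarrow> p \<noteq> [] \<and> set p \<subseteq> E \<and>
     (\<forall>k. Suc k < length p \<longrightarrow> tail (p ! Suc k) = head (p ! k))"

definition network :: "'v set \<Rightarrow> 'e set \<Rightarrow> ('e \<Rightarrow> 'v) \<Rightarrow> ('e \<Rightarrow> 'v) \<Rightarrow> 'v \<Rightarrow> 'v set \<Rightarrow> bool" where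
  "network V E tail head s T \<longleftrightarrow>
     finite V \<and> finite E \<and> (\<forall>e\<in>E. tail e \<in> V \<and> head e \<in> V) \<and>
     \<comment> \<open>acyclic: no directed cycle\<close>
     (\<forall>p. is_path E tail head p \<longrightarrow> head (last p) \<noteq> tail (List.hd p)) \<and>
     \<comment> \<open>single source s: s has no incoming edges, every other node has one\<close>
     s \<in> V \<and> (\<forall>e\<in>E. head e \<noteq> s) \<and> (\<forall>v\<in>V. v \<noteq> s \<longrightarrow> (\<exists>e\<in>E. head e = v)) \<and>
     \<comment> \<open>sinks\<close>
     T \<subseteq> V - {s} \<and> (\<forall>t\<in>T. \<forall>e\<in>E. tail e \<noteq> t)"

definition In_edges :: "'e set \<Rightarrow> ('e \<Rightarrow> 'v) \<Rightarrow> 'v \<Rightarrow> 'e set" where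
  "In_edges E head v = {e \<in> E. head e = v}"

text \<open>Inputs of a coding node: imaginary source edges d_i' (Src i) or real edges.\<close>
datatype 'e inp = Src nat | Real 'e

text \<open>Coordinates of extended global encoding kernels: d_i' (D i) and e' (Err e).\<close>
datatype 'e coord = D nat | Err 'e

definition inputs :: "nat \<Rightarrow> 'e set \<Rightarrow> ('e \<Rightarrow> 'v) \<Rightarrow> 'v \<Rightarrow> 'v \<Rightarrow> 'e inp set" where
  "inputs \<omega> E head s v = (if v = s then Src ` {..<\<omega>} else Real ` In_edges E head v)"

definition unitv :: "'e coord \<Rightarrow> 'e coord \<Rightarrow> 'a::field" where
  "unitv c = (\<lambda>c'. if c' = c then 1 else 0)"

fun inp_kernel :: "('e \<Rightarrow> 'e coord \<Rightarrow> 'a::field) \<Rightarrow> 'e inp \<Rightarrow> 'e coord \<Rightarrow> 'a" where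
  "inp_kernel f (Src i) = unitv (D i)"
| "inp_kernel f (Real e) = f e"

text \<open>f is the family of extended global encoding kernels of the code with local
 encoding coefficients k (determined uniquely by this recursion on an acyclic network).\<close>
definition ext_kernels ::
  "nat \<Rightarrow> 'e set \<Rightarrow> ('e \<Rightarrow> 'v) \<Rightarrow> ('e \<Rightarrow> 'v) \<Rightarrow> 'v \<Rightarrow> ('e inp \<Rightarrow> 'e \<Rightarrow> 'a::field)
     \<Rightarrow> ('e \<Rightarrow> 'e coord \<Rightarrow> 'a) \<Rightarrow> bool" where
  "ext_kernels \<omega> E tail head s k f \<longleftrightarrow>
     (\<forall>e\<in>E. f e = (\<lambda>c. (\<Sum>d\<in>inputs \<omega> E head s (tail e). k d e * inp_kernel f d c) + unitv (Err e) c))"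

text \<open>Vectors indexed by In(t) are functions 'e \<Rightarrow> 'a vanishing outside In(t).\<close>
definition fscale :: "'a::field \<Rightarrow> ('e \<Rightarrow> 'a) \<Rightarrow> ('e \<Rightarrow> 'a)" where
  "fscale a v = (\<lambda>x. a * v x)"

definition row :: "'e set \<Rightarrow> ('e \<Rightarrow> 'v) \<Rightarrow> ('e \<Rightarrow> 'e coord \<Rightarrow> 'a::field) \<Rightarrow> 'v \<Rightarrow> 'e coord \<Rightarrow> 'e \<Rightarrow> 'a" where
  "row E head f t c = (\<lambda>e. if e \<in> In_edges E head t then f e c else 0)"

definition msg_space :: "nat \<Rightarrow> 'e set \<Rightarrow> ('e \<Rightarrow> 'v) \<Rightarrow> ('e \<Rightarrow> 'e coord \<Rightarrow> 'a::field) \<Rightarrow> 'v \<Rightarrow> ('e \<Rightarrow> 'a) set" where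
  "msg_space \<omega> E head f t = module.span fscale ((\<lambda>i. row E head f t (D i)) ` {..<\<omega>})"

definition err_space :: "'e set \<Rightarrow> ('e \<Rightarrow> 'v) \<Rightarrow> ('e \<Rightarrow> 'e coord \<Rightarrow> 'a::field) \<Rightarrow> 'v \<Rightarrow> 'e set \<Rightarrow> ('e \<Rightarrow> 'a) set" where
  "err_space E head f t \<xi> = module.span fscale ((\<lambda>e. row E head f t (Err e)) ` \<xi>)"

definition dmin :: "nat \<Rightarrow> 'e set \<Rightarrow> ('e \<Rightarrow> 'v) \<Rightarrow> ('e \<Rightarrow> 'e coord \<Rightarrow> 'a::field) \<Rightarrow> 'v \<Rightarrow> nat" where
  "dmin \<omega> E head f t = (LEAST n. \<exists>\<xi>. \<xi> \<subseteq> E \<and> card \<xi> = n \<and>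
       msg_space \<omega> E head f t \<inter> err_space E head f t \<xi> \<noteq> {0})"

definition matches :: "('e \<Rightarrow> 'a::zero) \<Rightarrow> 'e set \<Rightarrow> bool" where
  "matches z \<xi> \<longleftrightarrow> (\<forall>e. e \<notin> \<xi> \<longrightarrow> z e = 0)"

text \<open>Source messages x \<in> F^\<omega> as functions nat \<Rightarrow> 'a vanishing from \<omega> on.\<close>
definition messages :: "nat \<Rightarrow> (nat \<Rightarrow> 'a::zero) set" where
  "messages \<omega> = {x. \<forall>i\<ge>\<omega>. x i = 0}"

definition received ::
  "nat \<Rightarrow> 'e set \<Rightarrow> ('e \<Rightarrow> 'v) \<Rightarrow> ('e \<Rightarrow> 'e coord \<Rightarrow> 'a::field) \<Rightarrow> 'v
     \<Rightarrow> (nat \<Rightarrow> 'a) \<Rightarrow> ('e \<Rightarrow> 'a) \<Rightarrow> 'e \<Rightarrow> 'a" where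
  "received \<omega> E head f t x z = (\<lambda>e'. if e' \<in> In_edges E head t then
      (\<Sum>i<\<omega>. x i * f e' (D i)) + (\<Sum>e\<in>E. z e * f e' (Err e)) else 0)"

definition corrects ::
  "nat \<Rightarrow> 'e set \<Rightarrow> ('e \<Rightarrow> 'v) \<Rightarrow> ('e \<Rightarrow> 'e coord \<Rightarrow> 'a::field) \<Rightarrow> 'v \<Rightarrow> ('e \<Rightarrow> 'a) set \<Rightarrow> bool" where
  "corrects \<omega> E head f t Z \<longleftrightarrow>
     (\<forall>x\<in>messages \<omega>. \<forall>x'\<in>messages \<omega>. \<forall>z\<in>Z. \<forall>z'\<in>Z.
        received \<omega> E head f t x z = received \<omega> E head f t x' z' \<longrightarrow> x = x')"

definition is_cut :: "'e set \<Rightarrow> ('e \<Rightarrow> 'v) \<Rightarrow> ('e \<Rightarrow> 'v) \<Rightarrow> 'e set \<Rightarrow> 'v \<Rightarrow> 'e set \<Rightarrow> bool" where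
  "is_cut E tail head \<xi> u A \<longleftrightarrow> A \<subseteq> E \<and>
     (\<forall>p. is_path E tail head p \<and> List.hd p \<in> \<xi> \<and> head (last p) = u \<longrightarrow> set p \<inter> A \<noteq> {})"

definition mincut :: "'e set \<Rightarrow> ('e \<Rightarrow> 'v) \<Rightarrow> ('e \<Rightarrow> 'v) \<Rightarrow> 'e set \<Rightarrow> 'v \<Rightarrow> nat" where
  "mincut E tail head \<xi> u = (LEAST n. \<exists>A. is_cut E tail head \<xi> u A \<and> card A = n)"

definition cal_E :: "'e set \<Rightarrow> ('e \<Rightarrow> 'v) \<Rightarrow> ('e \<Rightarrow> 'v) \<Rightarrow> 'v \<Rightarrow> nat \<Rightarrow> 'e set set" where
  "cal_E E tail head t r = {\<xi>. \<xi> \<subseteq> E \<and> mincut E tail head \<xi> t \<le> r}"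

definition cal_Z :: "'e set \<Rightarrow> 'e set set \<Rightarrow> ('e \<Rightarrow> 'a::zero) set" where
  "cal_Z E \<Xi> = {z. \<exists>\<xi>\<in>\<Xi>. matches z \<xi>}"

end

theory Submission
  imports Defs
begin

definition Rel :: "'e set \<Rightarrow> ('e \<Rightarrow> 'v) \<Rightarrow> ('e \<Rightarrow> 'v) \<Rightarrow> ('e \<times> 'e) set" where
  "Rel E tail head = {(e0,e1). e0 \<in> E \<and> e1 \<in> E \<and> head e0 = tail e1}"

lemma is_path_snoc:
  assumes "is_path E tail head p" "b \<in> E" "tail b = head (last p)"
  shows "is_path E tail head (p @ [b])"
  unfolding is_path_def
proof (intro conjI allI impI)
  show "p @ [b] \<noteq> []" by simp
  show "set (p @ [b]) \<subseteq> E" using assms unfolding is_path_def by auto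
  fix k assume k: "Suc k < length (p @ [b])"
  show "tail ((p @ [b]) ! Suc k) = head ((p @ [b]) ! k)"
  proof (cases "Suc k < length p")
    case True then show ?thesis using assms(1) unfolding is_path_def by (auto simp: nth_append)
  next
    case False
    then have "Suc k = length p" using k by simp
    moreover have "p \<noteq> []" using assms(1) unfolding is_path_def by auto
    ultimately have "length p - Suc 0 = k" "k < length p" by auto
    then show ?thesis using assms(3) \<open>p \<noteq> []\<close> \<open>Suc k = length p\<close>
      by (auto simp: nth_append last_conv_nth)
  qed
qed

lemma is_path_Cons:
  assumes "is_path E tail head p" "a \<in> E" "tail (hd p) = head a"
  shows "is_path E tail head (a # p)"
  unfolding is_path_def
proof (intro conjI allI impI)
  show "a # p \<noteq> []" by simp
  show "set (a # p) \<subseteq> E" using assms unfolding is_path_def by auto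
  fix k assume k: "Suc k < length (a # p)"
  show "tail ((a # p) ! Suc k) = head ((a # p) ! k)"
  proof (cases k)
    case 0
    have "p \<noteq> []" using assms(1) unfolding is_path_def by auto
    then show ?thesis using 0 assms(3) by (simp add: hd_conv_nth)
  next
    case (Suc j)
    then show ?thesis using assms(1) k unfolding is_path_def by auto
  qed
qed

lemma trancl_path:
  assumes "(a,b) \<in> (Rel E tail head)\<^sup>+"
  shows "\<exists>p. is_path E tail head p \<and> hd p = a \<and> head (last p) = tail b"
  using assms
proof (induction rule: trancl_induct)
  case (base y)
  then show ?case by (intro exI[of _ "[a]"]) (auto simp: is_path_def Rel_def)
next
  case (step y z)
  then obtain p where p: "is_path E tail head p" "hd p = a" "head (last p) = tail y" by blast
  have "y \<in> E" "head y = tail z" using step(2) by (auto simp: Rel_def)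
  then have "is_path E tail head (p @ [y])" using is_path_snoc[OF p(1)] p(3) by auto
  moreover have "p \<noteq> []" using p(1) by (auto simp: is_path_def)
  ultimately show ?case using p \<open>head y = tail z\<close> by (intro exI[of _ "p @ [y]"]) auto
qed

lemma Rel_wf:
  assumes "network V E tail head s T"
  shows "wf (Rel E tail head)" "wf ((Rel E tail head)\<inverse>)"
proof -
  have fin: "finite (Rel E tail head)"
    by (rule finite_subset[of _ "E \<times> E"]) (use assms in \<open>auto simp: Rel_def network_def\<close>)
  have ac: "acyclic (Rel E tail head)"
    unfolding acyclic_def
  proof (intro allI notI)
    fix a assume "(a,a) \<in> (Rel E tail head)\<^sup>+"
    from trancl_path[OF this] obtain p where "is_path E tail head p" "hd p = a" "head (last p) = tail a"
      by blast
    then show False using assms unfolding network_def by (metis (no_types, lifting))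
  qed
  show "wf (Rel E tail head)" by (rule finite_acyclic_wf[OF fin ac])
  show "wf ((Rel E tail head)\<inverse>)" by (rule finite_acyclic_wf_converse[OF fin ac])
qed

lemma ek_err:
  assumes ek: "ext_kernels \<omega> E tail head s k f" and e: "e \<in> E"
  shows "f e (Err c) = (if tail e = s then 0 else
            (\<Sum>d\<in>In_edges E head (tail e). k (Real d) e * f d (Err c))) + (if c = e then 1 else 0)"
proof -
  have fe: "f e (Err c) = (\<Sum>d\<in>inputs \<omega> E head s (tail e). k d e * inp_kernel f d (Err c)) + unitv (Err e) (Err c)"
    using ek e unfolding ext_kernels_def by auto
  show ?thesis
  proof (cases "tail e = s")
    case True
    then show ?thesis using fe by (simp add: inputs_def unitv_def sum.reindex inj_on_def)
  next
    case False
    then show ?thesis using fe by (simp add: inputs_def unitv_def sum.reindex inj_on_def)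
  qed
qed

lemma RR:
  assumes net: "network V E tail head s T" and ek: "ext_kernels \<omega> E tail head s k f"
    and e0: "e0 \<in> E"
  shows "eh \<in> E \<Longrightarrow> f eh (Err e0) = (if eh = e0 then 1 else 0) +
            (\<Sum>e1\<in>{e1\<in>E. tail e1 = head e0}. k (Real e0) e1 * f eh (Err e1))"
proof (induction eh rule: wf_induct_rule[OF Rel_wf(1)[OF net]])
  case (1 eh)
  define Out where "Out = {e1\<in>E. tail e1 = head e0}"
  have nos: "\<forall>e\<in>E. head e \<noteq> s" using net by (simp add: network_def)
  show ?case
  proof (cases "tail eh = s")
    case True
    have "eh \<notin> Out" using True nos e0 unfolding Out_def by auto
    then have "(\<Sum>e1\<in>Out. k (Real e0) e1 * f eh (Err e1)) = 0"
      using ek_err[OF ek 1(2)] True by (auto intro!: sum.neutral)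
    then show ?thesis using ek_err[OF ek 1(2), of e0] True unfolding Out_def by auto
  next
    case False
    define In' where "In' = In_edges E head (tail eh)"
    define kk where "kk d = k (Real d) eh" for d
    define k0 where "k0 e1 = k (Real e0) e1" for e1
    have IH: "f d (Err e0) = (if d = e0 then 1 else 0) + (\<Sum>e1\<in>Out. k0 e1 * f d (Err e1))"
      if "d \<in> In'" for d
      using 1(1)[of d] that 1(2) unfolding In'_def In_edges_def Rel_def Out_def k0_def by auto
    have finIn: "finite In'" using net unfolding In'_def In_edges_def network_def by auto
    have finOut: "finite Out" using net unfolding Out_def network_def by auto
    have "f eh (Err e0) = (\<Sum>d\<in>In'. kk d * f d (Err e0)) + (if e0 = eh then 1 else 0)"
      using ek_err[OF ek 1(2), of e0] False unfolding In'_def kk_def by simp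
    also have "(\<Sum>d\<in>In'. kk d * f d (Err e0)) =
       (\<Sum>d\<in>In'. kk d * ((if d = e0 then 1 else 0) + (\<Sum>e1\<in>Out. k0 e1 * f d (Err e1))))"
      using IH by (intro sum.cong) auto
    also have "\<dots> = (\<Sum>d\<in>In'. (if d = e0 then kk d else 0)) +
        (\<Sum>d\<in>In'. \<Sum>e1\<in>Out. k0 e1 * (kk d * f d (Err e1)))"
    proof -
      have "kk d * ((if d = e0 then 1 else 0) + (\<Sum>e1\<in>Out. k0 e1 * f d (Err e1))) =
          (if d = e0 then kk d else 0) + (\<Sum>e1\<in>Out. k0 e1 * (kk d * f d (Err e1)))" for d
        by (simp add: distrib_left sum_distrib_left mult.left_commute)
      then show ?thesis by (simp add: sum.distrib)
    qed
    also have "(\<Sum>d\<in>In'. \<Sum>e1\<in>Out. k0 e1 * (kk d * f d (Err e1))) =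
        (\<Sum>e1\<in>Out. k0 e1 * (\<Sum>d\<in>In'. kk d * f d (Err e1)))"
      by (subst sum.swap) (simp add: sum_distrib_left)
    also have "(\<Sum>d\<in>In'. (if d = e0 then kk d else 0)) = (if eh \<in> Out then k0 eh else 0)"
      using finIn e0 1(2) unfolding In'_def In_edges_def Out_def kk_def k0_def
      by (auto simp: sum.delta)
    also have "(if eh \<in> Out then k0 eh else 0) = (\<Sum>e1\<in>Out. k0 e1 * (if e1 = eh then 1 else 0))"
      using finOut by (auto simp: sum.delta if_distrib cong: if_cong)
    finally have "f eh (Err e0) = (if e0 = eh then 1 else 0) +
        (\<Sum>e1\<in>Out. k0 e1 * ((\<Sum>d\<in>In'. kk d * f d (Err e1)) + (if e1 = eh then 1 else 0)))"
      by (simp add: distrib_left sum.distrib algebra_simps)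
    also have "\<dots> = (if eh = e0 then 1 else 0) + (\<Sum>e1\<in>Out. k0 e1 * f eh (Err e1))"
      using ek_err[OF ek 1(2)] False unfolding In'_def kk_def by auto
    finally show ?thesis unfolding Out_def k0_def .
  qed
qed

lemma vs_fscale: "vector_space (fscale :: 'a::field \<Rightarrow> ('e \<Rightarrow> 'a) \<Rightarrow> ('e \<Rightarrow> 'a))"
  by unfold_locales (auto simp: fscale_def fun_eq_iff algebra_simps)

interpretation FV: vector_space "fscale :: 'a::field \<Rightarrow> ('e \<Rightarrow> 'a) \<Rightarrow> ('e \<Rightarrow> 'a)"
  by (rule vs_fscale)

lemma fscale_zero[simp]: "fscale 0 v = 0" by (simp add: fscale_def fun_eq_iff)

lemma sum_fun_apply: "(\<Sum>i\<in>I. (g i :: 'e \<Rightarrow> 'b::comm_monoid_add)) x = (\<Sum>i\<in>I. g i x)"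
  by (induction I rule: infinite_finite_induct) auto

lemma indep_from_dim:
  fixes B :: "('e \<Rightarrow> 'a::field) set"
  assumes fB: "finite B" and d: "FV.dim (FV.span B) \<ge> card B"
  shows "FV.independent B"
proof -
  {
    fix a
    assume a: "a \<in> B" "a \<in> FV.span (B - {a})"
    from a fB have c0: "card B \<noteq> 0" by auto
    from a fB have cb: "card (B - {a}) = card B - 1" by auto
    have eq: "insert a (B - {a}) = B" using a by blast
    have th1: "FV.span B \<subseteq> FV.span (B - {a})"
      using FV.span_trans[OF a(2), unfolded eq] by blast
    have "FV.dim (FV.span B) \<le> card (B - {a})"
      by (rule FV.dim_le_card[OF th1]) (use fB in auto)
    with c0 d cb have False by simp
  }
  then show ?thesis unfolding FV.dependent_def by blast
qed

lemma SC:
  fixes f :: "'e \<Rightarrow> 'e coord \<Rightarrow> 'a::field"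
  assumes net: "network V E tail head s T" and ek: "ext_kernels \<omega> E tail head s k f"
    and AE: "A \<subseteq> E"
  shows "e0 \<in> E \<Longrightarrow> is_cut E tail head {e0} t A \<Longrightarrow>
     row E head f t (Err e0) \<in> FV.span ((\<lambda>a. row E head f t (Err a)) ` A)"
proof (induction e0 rule: wf_induct_rule[OF Rel_wf(2)[OF net]])
  case (1 e0)
  define Out where "Out = {e1\<in>E. tail e1 = head e0}"
  let ?S = "FV.span ((\<lambda>a. row E head f t (Err a)) ` A)"
  show ?case
  proof (cases "e0 \<in> A")
    case True then show ?thesis by (intro FV.span_base) auto
  next
    case False
    have notin: "e0 \<notin> In_edges E head t"
    proof
      assume "e0 \<in> In_edges E head t"
      then have "is_path E tail head [e0]" "head (last [e0]) = t" "hd [e0] \<in> {e0}"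
        by (auto simp: is_path_def In_edges_def)
      then show False using 1(3) False unfolding is_cut_def by auto
    qed
    have eq: "row E head f t (Err e0) = (\<Sum>e1\<in>Out. fscale (k (Real e0) e1) (row E head f t (Err e1)))"
    proof
      fix eh
      show "row E head f t (Err e0) eh = (\<Sum>e1\<in>Out. fscale (k (Real e0) e1) (row E head f t (Err e1))) eh"
      proof (cases "eh \<in> In_edges E head t")
        case True
        then have "eh \<in> E" "eh \<noteq> e0" using notin by (auto simp: In_edges_def)
        then show ?thesis using RR[OF net ek 1(2) \<open>eh \<in> E\<close>] True
          by (simp add: row_def sum_fun_apply fscale_def Out_def)
      next
        case False
        then show ?thesis by (simp add: row_def sum_fun_apply fscale_def)
      qed
    qed
    have "row E head f t (Err e1) \<in> ?S" if e1: "e1 \<in> Out" for e1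
    proof (rule 1(1))
      show "(e1, e0) \<in> (Rel E tail head)\<inverse>" using e1 1(2) by (auto simp: Rel_def Out_def)
      show "e1 \<in> E" using e1 by (auto simp: Out_def)
      show "is_cut E tail head {e1} t A" unfolding is_cut_def
      proof (intro conjI allI impI)
        show "A \<subseteq> E" by (rule AE)
        fix p assume p: "is_path E tail head p \<and> hd p \<in> {e1} \<and> head (last p) = t"
        then have pne: "p \<noteq> []" by (auto simp: is_path_def)
        have "is_path E tail head (e0 # p)"
          using is_path_Cons[of E tail head p e0] p 1(2) e1 unfolding Out_def by auto
        moreover have "hd (e0 # p) \<in> {e0}" "head (last (e0 # p)) = t" using p pne by auto
        ultimately have "set (e0 # p) \<inter> A \<noteq> {}" using 1(3) unfolding is_cut_def by blast
        then show "set p \<inter> A \<noteq> {}" using False by auto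
      qed
    qed
    then show ?thesis unfolding eq by (intro FV.span_sum FV.span_scale) auto
  qed
qed

lemma err_in:
  fixes f :: "'e \<Rightarrow> 'e coord \<Rightarrow> 'a::field"
  assumes net: "network V E tail head s T" and ek: "ext_kernels \<omega> E tail head s k f"
    and AE: "A \<subseteq> E" and xE: "\<xi> \<subseteq> E" and cut: "is_cut E tail head \<xi> t A"
    and m: "matches z \<xi>"
  shows "(\<Sum>e\<in>E. fscale (z e) (row E head f t (Err e))) \<in> FV.span ((\<lambda>a. row E head f t (Err a)) ` A)"
proof (intro FV.span_sum)
  fix e assume e: "e \<in> E"
  show "fscale (z e) (row E head f t (Err e)) \<in> FV.span ((\<lambda>a. row E head f t (Err a)) ` A)"
  proof (cases "e \<in> \<xi>")
    case True
    have "is_cut E tail head {e} t A" using cut True unfolding is_cut_def by auto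
    then show ?thesis using SC[OF net ek AE e] by (intro FV.span_scale)
  next
    case False
    then show ?thesis using m FV.span_zero by (simp add: matches_def)
  qed
qed

lemma cut_exists:
  assumes "finite E" "\<xi> \<subseteq> E"
  shows "\<exists>A. is_cut E tail head \<xi> u A \<and> card A = mincut E tail head \<xi> u"
proof -
  have "is_cut E tail head \<xi> u E" unfolding is_cut_def is_path_def
    by (auto simp: neq_Nil_conv)
  then have "\<exists>n A. is_cut E tail head \<xi> u A \<and> card A = n" by blast
  then show ?thesis unfolding mincut_def by (rule LeastI_ex)
qed

lemma recv_eq:
  "received \<omega> E head f t x z = (\<Sum>i<\<omega>. fscale (x i) (row E head f t (D i))) +
      (\<Sum>e\<in>E. fscale (z e) (row E head f t (Err e)))"
  by (auto simp: received_def fun_eq_iff sum_fun_apply fscale_def row_def)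

theorem corollary12:
  fixes V :: "'v set" and E :: "'e set" and tail head :: "'e \<Rightarrow> 'v" and s :: 'v and T :: "'v set"
    and \<omega> :: nat and k :: "'e inp \<Rightarrow> 'e \<Rightarrow> 'a::{field,finite}"
    and f :: "'e \<Rightarrow> 'e coord \<Rightarrow> 'a" and t :: 'v
  assumes "network V E tail head s T"
    and "\<omega> \<ge> 1"
    and "ext_kernels \<omega> E tail head s k f"
    and "t \<in> T"
    and "vector_space.dim fscale (msg_space \<omega> E head f t) = \<omega>"
  shows "corrects \<omega> E head f t
           (cal_Z E (cal_E E tail head t ((dmin \<omega> E head f t - 1) div 2)))"
  unfolding corrects_def
proof (intro ballI impI)
  note net = assms(1) and ek = assms(3)
  have finE: "finite E" using net by (simp add: network_def)
  define r where "r = (dmin \<omega> E head f t - 1) div 2"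
  define RD where "RD i = row E head f t (D i)" for i
  define RE where "RE e = row E head f t (Err e)" for e
  fix x x' z z'
  assume x: "x \<in> messages \<omega>" and x': "x' \<in> messages \<omega>"
    and z: "z \<in> cal_Z E (cal_E E tail head t ((dmin \<omega> E head f t - 1) div 2))"
    and z': "z' \<in> cal_Z E (cal_E E tail head t ((dmin \<omega> E head f t - 1) div 2))"
    and eq: "received \<omega> E head f t x z = received \<omega> E head f t x' z'"
  obtain \<xi> where \<xi>: "\<xi> \<subseteq> E" "mincut E tail head \<xi> t \<le> r" "matches z \<xi>"
    using z unfolding cal_Z_def cal_E_def r_def by auto
  obtain \<xi>' where \<xi>': "\<xi>' \<subseteq> E" "mincut E tail head \<xi>' t \<le> r" "matches z' \<xi>'"
    using z' unfolding cal_Z_def cal_E_def r_def by auto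
  obtain A where A: "is_cut E tail head \<xi> t A" "card A \<le> r"
    using cut_exists[OF finE \<xi>(1), of tail head t] \<xi>(2) by auto
  obtain A' where A': "is_cut E tail head \<xi>' t A'" "card A' \<le> r"
    using cut_exists[OF finE \<xi>'(1), of tail head t] \<xi>'(2) by auto
  have AE: "A \<subseteq> E" "A' \<subseteq> E" using A(1) A'(1) by (auto simp: is_cut_def)
  define v where "v = (\<Sum>i<\<omega>. fscale (x i - x' i) (RD i))"
  have v_eq: "v = (\<Sum>e\<in>E. fscale (z' e) (RE e)) - (\<Sum>e\<in>E. fscale (z e) (RE e))"
  proof -
    have "v = (\<Sum>i<\<omega>. fscale (x i) (RD i)) - (\<Sum>i<\<omega>. fscale (x' i) (RD i))"
      unfolding v_def by (simp add: FV.scale_left_diff_distrib sum_subtractf)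
    moreover have "v = b' - b" if "v = a - a'" "a + b = a' + b'" for a a' b b' :: "'e \<Rightarrow> 'a"
    proof -
      have "a - a' = b' - b" using that(2) by (metis add_diff_cancel_right' add_diff_eq diff_diff_eq2 add.commute)
      then show ?thesis using that(1) by simp
    qed
    ultimately show ?thesis using eq unfolding recv_eq RD_def RE_def by blast
  qed
  have v_err: "v \<in> err_space E head f t (A \<union> A')"
  proof -
    have s1: "(\<Sum>e\<in>E. fscale (z e) (RE e)) \<in> err_space E head f t (A \<union> A')"
      using err_in[OF net ek AE(1) \<xi>(1) A(1) \<xi>(3)] FV.span_mono[of "RE ` A" "RE ` (A \<union> A')"]
      unfolding err_space_def RE_def by auto
    have s2: "(\<Sum>e\<in>E. fscale (z' e) (RE e)) \<in> err_space E head f t (A \<union> A')"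
      using err_in[OF net ek AE(2) \<xi>'(1) A'(1) \<xi>'(3)] FV.span_mono[of "RE ` A'" "RE ` (A \<union> A')"]
      unfolding err_space_def RE_def by auto
    show ?thesis unfolding v_eq using s1 s2 unfolding err_space_def by (intro FV.span_diff)
  qed
  define B where "B = RD ` {..<\<omega>}"
  have msgB: "msg_space \<omega> E head f t = FV.span B" unfolding msg_space_def B_def RD_def ..
  have v_msg: "v \<in> msg_space \<omega> E head f t"
    unfolding msgB v_def B_def by (intro FV.span_sum FV.span_scale FV.span_base) auto
  have finB: "finite B" unfolding B_def by simp
  have dimB: "FV.dim (FV.span B) = \<omega>" using assms(5) msgB by simp
  have cardB: "card B \<le> \<omega>" unfolding B_def using card_image_le[of "{..<\<omega>}" RD] by simp
  have "FV.dim (FV.span B) \<le> card B" by (rule FV.dim_le_card[OF _ finB]) simp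
  then have cardB': "card B = \<omega>" using cardB dimB by simp
  have inj: "inj_on RD {..<\<omega>}"
    by (rule eq_card_imp_inj_on) (use cardB' in \<open>simp_all add: B_def\<close>)
  have ind: "FV.independent B" by (rule indep_from_dim[OF finB]) (simp only: dimB cardB' order_refl)
  show "x = x'"
  proof (rule ccontr)
    assume "x \<noteq> x'"
    then obtain i0 where i0: "x i0 \<noteq> x' i0" by auto
    then have i0w: "i0 < \<omega>" using x x' unfolding messages_def by (metis (mono_tags, lifting) mem_Collect_eq not_le)
    define c where "c b = x (inv_into {..<\<omega>} RD b) - x' (inv_into {..<\<omega>} RD b)" for b
    have v0: "v \<noteq> 0"
    proof
      assume "v = 0"
      have "v = (\<Sum>b\<in>B. fscale (c b) b)"
        unfolding v_def B_def c_def by (simp add: sum.reindex[OF inj] inv_into_f_f[OF inj])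
      then have "(\<Sum>b\<in>B. fscale (c b) b) = 0" using \<open>v = 0\<close> by simp
      from FV.independentD[OF ind finB subset_refl this, of "RD i0"] i0w
      have "c (RD i0) = 0" unfolding B_def by auto
      then show False using i0 i0w inv_into_f_f[OF inj, of i0] unfolding c_def by simp
    qed
    have C: "A \<union> A' \<subseteq> E" using AE by auto
    show False
    proof (cases "dmin \<omega> E head f t = 0")
      case True
      then have "r = 0" unfolding r_def by simp
      then have "A = {}" "A' = {}" using A(2) A'(2) AE finE
        by (auto simp: card_eq_0_iff dest: finite_subset)
      then show False using v_err v0 unfolding err_space_def by simp
    next
      case False
      have "msg_space \<omega> E head f t \<inter> err_space E head f t (A \<union> A') \<noteq> {0}"
        using v_msg v_err v0 by blast
      then have "dmin \<omega> E head f t \<le> card (A \<union> A')"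
        unfolding dmin_def using C by (intro Least_le) blast
      moreover have "card (A \<union> A') \<le> card A + card A'" by (rule card_Un_le)
      ultimately show False using A(2) A'(2) False unfolding r_def by linarith
    qed
  qed
qed

end
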